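(* Given an unknown $n$-qubit state $\rho$, any $\epsilon>0$, and any collection of $M$ $n$-qubit Pauli observables $P_1,\dots,P_M$, there is a learning algorithm using $n$ qubits of quantum memory that measures $\mathcal{O}(\log(M)/\epsilon^2)$ copies of $\rho$ and outputs estimates of $|\mathrm{Tr}(P_i\rho)|^2$ that are within additive error $\epsilon$ simultaneously for all $i\in[M]$, with probability at least $2/3$.
   Context: An $n$-qubit Pauli observable is a tensor product $\sigma_1\otimes\cdots\otimes\sigma_n$ with each $\sigma_j\in\{I,X,Y,Z\}$ (the standard Pauli matrices). A learning algorithm with $n$ qubits of quantum memory may store an $n$-qubit quantum state between rounds; in particular it may store one copy of $\rho$ and then perform a joint measurement on $\rho\otimes\rho$ (that copy together with a fresh copy). *)

theory Defs
  imports "Jordan_Normal_Form.Matrix" Complex_Main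
begin

definition mtrace :: "complex mat \<Rightarrow> complex" where
  "mtrace A = (\<Sum>i<dim_row A. A $$ (i,i))"

definition kron :: "complex mat \<Rightarrow> complex mat \<Rightarrow> complex mat" where
  "kron A B = mat (dim_row A * dim_row B) (dim_col A * dim_col B)
     (\<lambda>(i,j). A $$ (i div dim_row B, j div dim_col B) * B $$ (i mod dim_row B, j mod dim_col B))"

definition psd :: "nat \<Rightarrow> complex mat \<Rightarrow> bool" where
  "psd d A \<longleftrightarrow> A \<in> carrier_mat d d \<and>
     (\<forall>v \<in> carrier_vec d. Im (conjugate v \<bullet> (A *\<^sub>v v)) = 0 \<and> Re (conjugate v \<bullet> (A *\<^sub>v v)) \<ge> 0)"

definition density :: "nat \<Rightarrow> complex mat \<Rightarrow> bool" where
  "density n \<rho> \<longleftrightarrow> psd (2^n) \<rho> \<and> mtrace \<rho> = 1"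

(* single-qubit Pauli matrices: 0 = I, 1 = X, 2 = Y, 3 = Z *)
definition pauli :: "nat \<Rightarrow> complex mat" where
  "pauli k = (if k = 0 then mat 2 2 (\<lambda>(i,j). if i = j then 1 else 0)
     else if k = 1 then mat 2 2 (\<lambda>(i,j). if i = j then 0 else 1)
     else if k = 2 then mat 2 2 (\<lambda>(i,j). if i = j then 0 else if i = 0 then - \<i> else \<i>)
     else mat 2 2 (\<lambda>(i,j). if i = j then (if i = 0 then 1 else -1) else 0))"

(* n-qubit Pauli observable sigma_1 \<otimes> ... \<otimes> sigma_n given by a word over {0,1,2,3} *)
definition is_pauli_word :: "nat \<Rightarrow> nat list \<Rightarrow> bool" where
  "is_pauli_word n w \<longleftrightarrow> length w = n \<and> set w \<subseteq> {..<4}"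

definition pauli_obs :: "nat list \<Rightarrow> complex mat" where
  "pauli_obs w = foldr (\<lambda>k A. kron (pauli k) A) w (1\<^sub>m 1)"

definition is_povm :: "nat \<Rightarrow> nat \<Rightarrow> (nat \<Rightarrow> complex mat) \<Rightarrow> bool" where
  "is_povm d m E \<longleftrightarrow> (\<forall>k<m. psd d (E k)) \<and>
     (\<forall>i<d. \<forall>j<d. (\<Sum>k<m. E k $$ (i,j)) = (1\<^sub>m d) $$ (i,j))"

(* Two-copy protocol with n qubits of memory: in each of T rounds the learner stores one copy
   of rho (n qubits of memory) and measures it jointly with a fresh copy, i.e. measures rho\<otimes>rho
   with a 2n-qubit POVM with outcomes {..<m}, chosen adaptively from the history of outcomes.
   E h k = POVM element for outcome k after history h. *)
definition valid_protocol :: "nat \<Rightarrow> nat \<Rightarrow> nat \<Rightarrow> (nat list \<Rightarrow> nat \<Rightarrow> complex mat) \<Rightarrow> bool" where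
  "valid_protocol n T m E \<longleftrightarrow>
     (\<forall>h. length h < T \<and> set h \<subseteq> {..<m} \<longrightarrow> is_povm (2^(2*n)) m (E h))"

definition outcome_seqs :: "nat \<Rightarrow> nat \<Rightarrow> nat list set" where
  "outcome_seqs T m = {xs. length xs = T \<and> set xs \<subseteq> {..<m}}"

definition seq_prob :: "complex mat \<Rightarrow> (nat list \<Rightarrow> nat \<Rightarrow> complex mat) \<Rightarrow> nat list \<Rightarrow> real" where
  "seq_prob \<rho> E xs = (\<Prod>t<length xs. Re (mtrace (E (take t xs) (xs ! t) * kron \<rho> \<rho>)))"

definition success_prob ::
  "nat \<Rightarrow> nat \<Rightarrow> (nat list \<Rightarrow> nat \<Rightarrow> complex mat) \<Rightarrow> (nat list \<Rightarrow> nat \<Rightarrow> real)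
   \<Rightarrow> nat \<Rightarrow> (nat \<Rightarrow> nat list) \<Rightarrow> real \<Rightarrow> complex mat \<Rightarrow> real" where
  "success_prob T m E est M P \<epsilon> \<rho> =
     (\<Sum>xs \<in> outcome_seqs T m.
        if (\<forall>i<M. \<bar>est xs i - (cmod (mtrace (pauli_obs (P i) * \<rho>)))^2\<bar> \<le> \<epsilon>)
        then seq_prob \<rho> E xs else 0)"

end

theory Submission
  imports Defs
begin


lemma sum_split:
  fixes f :: "nat \<Rightarrow> 'a::comm_monoid_add"
  shows "(\<Sum>k<a*b. f k) = (\<Sum>d<a. \<Sum>k<b. f (d*b + k))"
proof -
  have "(\<Sum>k<a*b. f k) = (\<Sum>d<a. sum f {d*b..<d*b+b})"
    using sum.nat_group[of f b a] by simp
  also have "\<dots> = (\<Sum>d<a. \<Sum>k<b. f (d*b + k))"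
  proof (rule sum.cong[OF refl])
    fix d
    have "sum f {d*b..<d*b+b} = sum f {0+d*b..<b+d*b}" by (simp add: add.commute)
    also have "\<dots> = (\<Sum>k=0..<b. f (k + d*b))" by (rule sum.shift_bounds_nat_ivl)
    finally show "sum f {d*b..<d*b+b} = (\<Sum>k<b. f (d*b + k))"
      by (simp add: atLeast0LessThan add.commute)
  qed
  finally show ?thesis .
qed

definition lam1 :: "nat \<Rightarrow> nat \<Rightarrow> real" where
 "lam1 p q = (if p = 0 then 1 else if p = 1 then (if q \<le> 1 then 1 else -1)
    else if p = 2 then (if q = 1 \<or> q = 3 then 1 else -1) else (if q = 0 \<or> q = 3 then 1 else -1))"

fun lamw :: "nat list \<Rightarrow> nat list \<Rightarrow> real" where
 "lamw (p#P) (q#Q) = lam1 p q * lamw P Q" | "lamw _ _ = 1"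

fun pent :: "nat list \<Rightarrow> nat \<Rightarrow> nat \<Rightarrow> complex" where
 "pent [] x y = (if x = 0 \<and> y = 0 then 1 else 0)" |
 "pent (k#w) x y = pauli k $$ (x div 2^length w, y div 2^length w) * pent w (x mod 2^length w) (y mod 2^length w)"

fun dec :: "nat \<Rightarrow> nat \<Rightarrow> nat list" where
 "dec 0 k = []" | "dec (Suc n) k = (k div 4^n) # dec n (k mod 4^n)"

lemma pauli_dim[simp]: "dim_row (pauli k) = 2" "dim_col (pauli k) = 2" "pauli k \<in> carrier_mat 2 2"
  by (auto simp: pauli_def)

lemma pauli_entry:
  assumes "x < 2" "y < 2"
  shows "pauli k $$ (x,y) = (if k = 0 then (if x = y then 1 else 0)
     else if k = 1 then (if x = y then 0 else 1)
     else if k = 2 then (if x = y then 0 else if x = 0 then - \<i> else \<i>)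
     else (if x = y then (if x = 0 then 1 else -1) else 0))"
  using assms by (auto simp: pauli_def)

lemma lt2: "(x::nat) < 2 \<longleftrightarrow> x = 0 \<or> x = 1" by auto

lemma sum4: "(\<Sum>q<(4::nat). f q) = f 0 + f 1 + f 2 + (f 3 :: 'a::comm_monoid_add)"
  by (simp add: numeral_eq_Suc lessThan_Suc add.commute add.left_commute)

lemma pauli_sq:
  assumes "x < 2" "y < 2" "a < 2" "b < 2"
  shows "(\<Sum>q<4. complex_of_real (lam1 p q) * pauli q $$ (x,y) * cnj (pauli q $$ (a,b)))
     = 2 * pauli p $$ (x,a) * pauli p $$ (y,b)"
  using assms unfolding sum4 lt2
  by (auto simp: pauli_entry lam1_def complex_eq_iff)

lemma pauli_herm:
  assumes "x < 2" "y < 2"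
  shows "pauli p $$ (y,x) = cnj (pauli p $$ (x,y))"
  using assms unfolding lt2 by (auto simp: pauli_entry complex_eq_iff)


lemma pauli_obs_Nil: "pauli_obs [] = 1\<^sub>m 1" by (simp add: pauli_obs_def)
lemma pauli_obs_Cons: "pauli_obs (k#w) = kron (pauli k) (pauli_obs w)" by (simp add: pauli_obs_def)

lemma pauli_obs_dim[simp]: "dim_row (pauli_obs w) = 2^length w" "dim_col (pauli_obs w) = 2^length w"
  by (induction w) (auto simp: pauli_obs_Nil pauli_obs_Cons kron_def)

lemma div_lt2: "(x::nat) < 2 * 2^n \<Longrightarrow> x div 2^n < 2"
  by (simp add: less_mult_imp_div_less mult.commute)

lemma pauli_obs_entry:
  "x < 2^length w \<Longrightarrow> y < 2^length w \<Longrightarrow> pauli_obs w $$ (x,y) = pent w x y"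
proof (induction w arbitrary: x y)
  case Nil then show ?case by (simp add: pauli_obs_Nil)
next
  case (Cons k w)
  have x: "x < 2 * 2^length w" and y: "y < 2 * 2^length w" using Cons.prems by auto
  have "kron (pauli k) (pauli_obs w) $$ (x,y) = pauli k $$ (x div 2^length w, y div 2^length w)
      * pauli_obs w $$ (x mod 2^length w, y mod 2^length w)"
    unfolding kron_def using x y by (subst index_mat) auto
  also have "pauli_obs w $$ (x mod 2^length w, y mod 2^length w) = pent w (x mod 2^length w) (y mod 2^length w)"
    by (rule Cons.IH) auto
  finally show ?case by (simp add: pauli_obs_Cons)
qed

lemma pent_herm:
  "x < 2^length w \<Longrightarrow> y < 2^length w \<Longrightarrow> pent w y x = cnj (pent w x y)"
proof (induction w arbitrary: x y)
  case Nil then show ?case by simp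
next
  case (Cons k w)
  have x: "x < 2 * 2^length w" and y: "y < 2 * 2^length w" using Cons.prems by auto
  have 1: "pauli k $$ (y div 2^length w, x div 2^length w) = cnj (pauli k $$ (x div 2^length w, y div 2^length w))"
    using x y by (intro pauli_herm div_lt2)
  have 2: "pent w (y mod 2^length w) (x mod 2^length w) = cnj (pent w (x mod 2^length w) (y mod 2^length w))"
    by (rule Cons.IH) auto
  show ?case by (simp only: pent.simps 1 2 complex_cnj_mult)
qed

lemma dec_length[simp]: "length (dec n k) = n"
  by (induction n arbitrary: k) auto

lemma dec_set: "k < 4^n \<Longrightarrow> set (dec n k) \<subseteq> {..<4}"
proof (induction n arbitrary: k)
  case 0 then show ?case by simp
next
  case (Suc n)
  have "k div 4^n < 4" using Suc.prems by (simp add: less_mult_imp_div_less mult.commute)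
  moreover have "k mod 4^n < 4^n" by simp
  ultimately show ?case using Suc.IH by auto
qed

lemma dec_split: "k < 4^n \<Longrightarrow> dec (Suc n) (d*4^n + k) = d # dec n k"
  by simp


lemma ID:
  assumes "x < 2^length P" "y < 2^length P" "a < 2^length P" "b < 2^length P"
  shows "(\<Sum>k<4^length P. complex_of_real (lamw P (dec (length P) k)) * pent (dec (length P) k) x y
            * cnj (pent (dec (length P) k) a b)) = 2^length P * pent P x a * pent P y b"
  using assms
proof (induction P arbitrary: x y a b)
  case Nil
  then show ?case by simp
next
  case (Cons p P)
  define n where "n = length P"
  define g where "g d = complex_of_real (lam1 p d) * pauli d $$ (x div 2^n, y div 2^n)
        * cnj (pauli d $$ (a div 2^n, b div 2^n))" for d
  define h where "h k = complex_of_real (lamw P (dec n k)) * pent (dec n k) (x mod 2^n) (y mod 2^n)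
        * cnj (pent (dec n k) (a mod 2^n) (b mod 2^n))" for k
  define F where "F k = complex_of_real (lamw (p#P) (dec (Suc n) k)) * pent (dec (Suc n) k) x y
            * cnj (pent (dec (Suc n) k) a b)" for k
  have L: "length (p#P) = Suc n" by (simp add: n_def)
  have "(\<Sum>k<4^length (p#P). F k) = (\<Sum>k<4*4^n. F k)" by (simp only: L power_Suc)
  also have "\<dots> = (\<Sum>d<4. \<Sum>k<4^n. F (d*4^n+k))"
    by (rule sum_split)
  also have "\<dots> = (\<Sum>d<4. \<Sum>k<4^n. g d * h k)"
  proof (intro sum.cong refl)
    fix d k assume k: "k \<in> {..<(4::nat)^n}"
    have D: "dec (Suc n) (d*4^n+k) = d # dec n k" using k by (intro dec_split) auto
    show "F (d*4^n+k) = g d * h k"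
      unfolding F_def g_def h_def D by (simp add: n_def[symmetric] ac_simps)
  qed
  also have "\<dots> = (\<Sum>d<4. g d) * (\<Sum>k<4^n. h k)"
    by (simp add: sum_product)
  also have "(\<Sum>k<4^n. h k) = 2^n * pent P (x mod 2^n) (a mod 2^n) * pent P (y mod 2^n) (b mod 2^n)"
    unfolding h_def n_def by (rule Cons.IH) auto
  also have "(\<Sum>d<4. g d) = 2 * pauli p $$ (x div 2^n, a div 2^n) * pauli p $$ (y div 2^n, b div 2^n)"
    unfolding g_def using Cons.prems by (intro pauli_sq) (auto simp: n_def div_lt2)
  finally have "(\<Sum>k<4^length (p#P). F k) = 2 ^ Suc n * pent (p#P) x a * pent (p#P) y b"
    by (simp add: n_def ac_simps)
  then show ?case by (simp only: F_def L)
qed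



definition qf :: "nat set \<Rightarrow> (nat \<Rightarrow> nat \<Rightarrow> complex) \<Rightarrow> (nat \<Rightarrow> complex) \<Rightarrow> complex" where
 "qf S A v = (\<Sum>i\<in>S. \<Sum>j\<in>S. cnj (v i) * A i j * v j)"

lemma qf_insert:
  assumes "finite S" "s \<notin> S"
  shows "qf (insert s S) A v = cnj (v s) * A s s * v s + cnj (v s) * (\<Sum>j\<in>S. A s j * v j)
     + (\<Sum>i\<in>S. cnj (v i) * A i s) * v s + qf S A v"
  using assms unfolding qf_def
  by (simp add: sum.insert sum.distrib sum_distrib_left sum_distrib_right algebra_simps)

lemma qf_cong: "(\<And>i. i \<in> S \<Longrightarrow> v i = v' i) \<Longrightarrow> qf S A v = qf S A v'"
  unfolding qf_def by (intro sum.cong refl) auto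


lemma cnorm_sq: "complex_of_real (cmod c) ^ 2 = c * cnj c"
  by (metis complex_norm_square of_real_power)

lemma zero_diag_row:
  assumes fin: "finite S" and sS: "s \<notin> S" and j: "j \<in> S"
    and herm: "\<forall>i\<in>insert s S. \<forall>j\<in>insert s S. A j i = cnj (A i j)"
    and psd: "\<forall>v. 0 \<le> Re (qf (insert s S) A v)"
    and z: "A s s = 0"
  shows "A s j = 0"
proof (rule ccontr)
  assume c0: "A s j \<noteq> 0"
  define c where "c = A s j"
  define R where "R = (Re (A j j) + 1) / (2 * (cmod c)^2)"
  define t where "t = - complex_of_real R * c"
  define v where "v i = (if i = s then t else if i = j then 1 else 0)" for i
  have js: "j \<noteq> s" using j sS by auto
  have Ajs: "A j s = cnj c"
  proof -
    have "s \<in> insert s S" "j \<in> insert s S" using j by auto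
    then show ?thesis using herm unfolding c_def by blast
  qed
  have vS: "v i = (if i = j then 1 else 0)" if "i \<in> S" for i
    using that sS unfolding v_def by auto
  have s1: "(\<Sum>j'\<in>S. A s j' * v j') = c"
  proof -
    have "(\<Sum>j'\<in>S. A s j' * v j') = (\<Sum>j'\<in>S. if j' = j then A s j' else 0)"
      by (intro sum.cong refl) (simp add: vS)
    also have "\<dots> = c" using fin j unfolding c_def by (simp add: sum.delta')
    finally show ?thesis .
  qed
  have s2: "(\<Sum>i\<in>S. cnj (v i) * A i s) = cnj c"
  proof -
    have "(\<Sum>i\<in>S. cnj (v i) * A i s) = (\<Sum>i\<in>S. if i = j then A i s else 0)"
      by (intro sum.cong refl) (simp add: vS)
    also have "\<dots> = cnj c" using fin j Ajs by (simp add: sum.delta')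
    finally show ?thesis .
  qed
  have inner: "(\<Sum>j'\<in>S. A i j' * v j') = A i j" for i
  proof -
    have "(\<Sum>j'\<in>S. A i j' * v j') = (\<Sum>j'\<in>S. if j' = j then A i j' else 0)"
      by (intro sum.cong refl) (simp add: vS)
    also have "\<dots> = A i j" using fin j by (simp add: sum.delta')
    finally show ?thesis .
  qed
  have s3: "qf S A v = A j j"
  proof -
    have "qf S A v = (\<Sum>i\<in>S. cnj (v i) * (\<Sum>j'\<in>S. A i j' * v j'))"
      unfolding qf_def by (simp add: sum_distrib_left mult.assoc)
    also have "\<dots> = (\<Sum>i\<in>S. if i = j then A i j else 0)"
      by (intro sum.cong refl) (simp only: inner, simp add: vS)
    also have "\<dots> = A j j" using fin j by (simp add: sum.delta')
    finally show ?thesis .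
  qed
  have vs: "v s = t" by (simp add: v_def)
  have "qf (insert s S) A v = cnj t * c + cnj c * t + A j j"
    using qf_insert[OF fin sS, of A v] s1 s2 s3 vs z by simp
  also have "\<dots> = - complex_of_real (2 * R * (cmod c)^2) + A j j"
    unfolding t_def using cnorm_sq[of c] by (simp add: algebra_simps)
  finally have "Re (qf (insert s S) A v) = - 2 * R * (cmod c)^2 + Re (A j j)" by simp
  also have "\<dots> = -1" using c0 unfolding R_def c_def by (simp add: field_simps)
  finally show False using psd by (metis add.inverse_inverse neg_0_le_iff_le not_one_le_zero)
qed


lemma qf_sub:
  assumes fin: "finite S" and sS: "s \<notin> S"
  shows "qf S A v = qf (insert s S) A (v(s := 0))"
proof -
  have "qf S A (v(s := 0)) = qf S A v" by (rule qf_cong) (use sS in auto)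
  then show ?thesis using qf_insert[OF fin sS, of A "v(s:=0)"] by simp
qed

lemma diag_nonneg:
  assumes fin: "finite S" and sS: "s \<notin> S" and psd: "\<forall>v. 0 \<le> Re (qf (insert s S) A v)"
  shows "0 \<le> Re (A s s)"
proof -
  define v where "v i = (if i = s then 1 else 0 :: complex)" for i
  have "qf S A v = 0" unfolding qf_def v_def using sS by (intro sum.neutral) auto
  moreover have "(\<Sum>j\<in>S. A s j * v j) = 0" "(\<Sum>i\<in>S. cnj (v i) * A i s) = 0"
    unfolding v_def using sS by (auto intro!: sum.neutral)
  ultimately have "qf (insert s S) A v = A s s"
    using qf_insert[OF fin sS, of A v] by (simp add: v_def)
  then show ?thesis using psd by metis
qed

lemma gram:
  assumes "finite S"
  shows "(\<forall>i\<in>S. \<forall>j\<in>S. A j i = cnj (A i j)) \<Longrightarrow> (\<forall>v. 0 \<le> Re (qf S A v)) \<Longrightarrow>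
    \<exists>W. \<forall>i\<in>S. \<forall>j\<in>S. A i j = (\<Sum>r\<in>S. W r i * cnj (W r j))"
  using assms
proof (induction S arbitrary: A rule: finite_induct)
  case empty
  then show ?case by simp
next
  case (insert s S A)
  note fin = insert.hyps(1) and sS = insert.hyps(2)
  note herm = insert.prems(1) and psd = insert.prems(2)
  have hh: "A j i = cnj (A i j)" if "i \<in> insert s S" "j \<in> insert s S" for i j
    using herm that by blast
  have "A s s = cnj (A s s)" using hh[of s s] by simp
  then have Im0: "Im (A s s) = 0" by (metis cnj.sel(2) complex_cnj_cancel_iff neg_equal_zero)
  define \<alpha> where "\<alpha> = Re (A s s)"
  have Ass: "A s s = complex_of_real \<alpha>" using Im0 unfolding \<alpha>_def by (simp add: complex_eq_iff)
  have \<alpha>0: "0 \<le> \<alpha>" unfolding \<alpha>_def by (rule diag_nonneg[OF fin sS psd])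
  have hermS: "\<forall>i\<in>S. \<forall>j\<in>S. A j i = cnj (A i j)" using hh by blast
  show ?case
  proof (cases "\<alpha> = 0")
    case True
    have row: "A s j = 0" if "j \<in> S" for j
      by (rule zero_diag_row[OF fin sS that herm psd]) (simp add: Ass True)
    have col: "A j s = 0" if "j \<in> S" for j
    proof -
      have "A j s = cnj (A s j)" using hh[of s j] that by simp
      then show ?thesis using row[OF that] by simp
    qed
    have psdS: "\<forall>v. 0 \<le> Re (qf S A v)"
      using psd qf_sub[OF fin sS, of A] by metis
    obtain W' where W': "\<forall>i\<in>S. \<forall>j\<in>S. A i j = (\<Sum>r\<in>S. W' r i * cnj (W' r j))"
      using insert.IH[OF hermS psdS] by blast
    define W where "W r i = (if r = s \<or> i = s then 0 else W' r i)" for r i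
    show ?thesis
    proof (intro exI ballI)
      fix i j assume i: "i \<in> insert s S" and j: "j \<in> insert s S"
      have sumW: "(\<Sum>r\<in>insert s S. W r i * cnj (W r j)) = (\<Sum>r\<in>S. W r i * cnj (W r j))"
        using fin sS by (simp add: sum.insert W_def)
      show "A i j = (\<Sum>r\<in>insert s S. W r i * cnj (W r j))"
      proof (cases "i = s \<or> j = s")
        case True
        then have "A i j = 0" using i j row col Ass \<open>\<alpha> = 0\<close> by auto
        moreover have "(\<Sum>r\<in>S. W r i * cnj (W r j)) = 0"
          using True by (intro sum.neutral) (auto simp: W_def)
        ultimately show ?thesis using sumW by simp
      next
        case False
        then have iS: "i \<in> S" and jS: "j \<in> S" using i j by auto
        have "(\<Sum>r\<in>S. W r i * cnj (W r j)) = (\<Sum>r\<in>S. W' r i * cnj (W' r j))"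
          using False sS by (intro sum.cong refl) (auto simp: W_def)
        then show ?thesis using sumW W' iS jS by simp
      qed
    qed
  next
    case False
    then have \<alpha>pos: "\<alpha> > 0" using \<alpha>0 by simp
    define sa where "sa = sqrt \<alpha>"
    have sa_pos: "sa > 0" using \<alpha>pos unfolding sa_def by simp
    have sa2: "sa * sa = \<alpha>" using \<alpha>0 unfolding sa_def by simp
    define w where "w i = A i s / complex_of_real sa" for i
    define A' where "A' i j = A i j - w i * cnj (w j)" for i j
    have hermA': "\<forall>i\<in>S. \<forall>j\<in>S. A' j i = cnj (A' i j)"
    proof (intro ballI)
      fix i j assume "i \<in> S" "j \<in> S"
      then have "A j i = cnj (A i j)" using hermS by blast
      then show "A' j i = cnj (A' i j)" unfolding A'_def by (simp add: mult.commute)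
    qed
    have psdA': "\<forall>v. 0 \<le> Re (qf S A' v)"
    proof
      fix v
      define b where "b = (\<Sum>j\<in>S. A s j * v j)"
      define v' where "v' = v(s := - b / A s s)"
      have v'S: "v' i = v i" if "i \<in> S" for i using that sS unfolding v'_def by auto
      have b1: "(\<Sum>j\<in>S. A s j * v' j) = b" unfolding b_def by (intro sum.cong refl) (simp add: v'S)
      have b2: "(\<Sum>i\<in>S. cnj (v' i) * A i s) = cnj b"
      proof -
        have "(\<Sum>i\<in>S. cnj (v' i) * A i s) = (\<Sum>i\<in>S. cnj (A s i * v i))"
        proof (intro sum.cong refl)
          fix i assume "i \<in> S"
          then have "A i s = cnj (A s i)" using hh[of s i] by simp
          then show "cnj (v' i) * A i s = cnj (A s i * v i)" using \<open>i \<in> S\<close> by (simp add: v'S)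
        qed
        then show ?thesis unfolding b_def by simp
      qed
      have q1: "qf S A v' = qf S A v" by (rule qf_cong) (simp add: v'S)
      have "qf (insert s S) A v' = cnj (v' s) * A s s * v' s + cnj (v' s) * b + cnj b * v' s + qf S A v"
        using qf_insert[OF fin sS, of A v'] b1 b2 q1 by simp
      also have "\<dots> = qf S A v - b * cnj b / complex_of_real \<alpha>"
        unfolding v'_def using \<alpha>pos by (simp add: Ass field_simps)
      finally have L: "qf (insert s S) A v' = qf S A v - b * cnj b / complex_of_real \<alpha>" .
      have "qf S A' v = qf S A v - (\<Sum>i\<in>S. cnj (v i) * w i) * (\<Sum>j\<in>S. cnj (w j) * v j)"
        unfolding qf_def A'_def
        by (simp add: algebra_simps sum_subtractf sum_distrib_left sum_distrib_right)
      also have "(\<Sum>i\<in>S. cnj (v i) * w i) = cnj b / complex_of_real sa"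
      proof -
        have "(\<Sum>i\<in>S. cnj (v i) * w i) = (\<Sum>i\<in>S. cnj (v' i) * A i s) / complex_of_real sa"
          unfolding w_def by (simp add: sum_divide_distrib v'S)
        then show ?thesis using b2 by simp
      qed
      also have "(\<Sum>j\<in>S. cnj (w j) * v j) = b / complex_of_real sa"
      proof -
        have "(\<Sum>j\<in>S. cnj (w j) * v j) = (\<Sum>j\<in>S. A s j * v j / complex_of_real sa)"
        proof (intro sum.cong refl)
          fix j assume "j \<in> S"
          then have "A j s = cnj (A s j)" using hh[of s j] by simp
          then show "cnj (w j) * v j = A s j * v j / complex_of_real sa" unfolding w_def by simp
        qed
        also have "\<dots> = (\<Sum>j\<in>S. A s j * v j) / complex_of_real sa" by (simp add: sum_divide_distrib)
        finally have "(\<Sum>j\<in>S. cnj (w j) * v j) = (\<Sum>j\<in>S. A s j * v j) / complex_of_real sa" .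
        then show ?thesis unfolding b_def .
      qed
      also have "qf S A v - cnj b / complex_of_real sa * (b / complex_of_real sa)
           = qf S A v - b * cnj b / complex_of_real \<alpha>"
        using sa_pos by (simp add: sa2[symmetric] field_simps)
      finally have "qf S A' v = qf (insert s S) A v'" using L by simp
      then show "0 \<le> Re (qf S A' v)" using psd by simp
    qed
    obtain W' where W': "\<forall>i\<in>S. \<forall>j\<in>S. A' i j = (\<Sum>r\<in>S. W' r i * cnj (W' r j))"
      using insert.IH[OF hermA' psdA'] by blast
    define W where "W r i = (if r = s then w i else if i = s then 0 else W' r i)" for r i
    show ?thesis
    proof (intro exI ballI)
      fix i j assume i: "i \<in> insert s S" and j: "j \<in> insert s S"
      have sumW: "(\<Sum>r\<in>insert s S. W r i * cnj (W r j)) = w i * cnj (w j) + (\<Sum>r\<in>S. W r i * cnj (W r j))"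
        using fin sS by (simp add: sum.insert W_def)
      have ws: "w s = complex_of_real sa"
        unfolding w_def Ass using sa_pos by (simp add: sa2[symmetric] field_simps)
      show "A i j = (\<Sum>r\<in>insert s S. W r i * cnj (W r j))"
      proof (cases "i = s \<or> j = s")
        case True
        have z: "(\<Sum>r\<in>S. W r i * cnj (W r j)) = 0"
          using True sS by (intro sum.neutral) (auto simp: W_def)
        have "A i j = w i * cnj (w j)"
        proof (cases "i = s")
          case i_s: True
          show ?thesis
          proof (cases "j = s")
            case True then show ?thesis using i_s ws Ass sa2 by (simp flip: of_real_mult)
          next
            case False
            then have "A j s = cnj (A s j)" using j hh[of s j] by simp
            then show ?thesis using i_s ws sa_pos unfolding w_def by (simp add: field_simps)
          qed
        next
          case False
          then have js: "j = s" using True by simp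
          show ?thesis using js ws sa_pos unfolding w_def by (simp add: field_simps)
        qed
        then show ?thesis using sumW z by simp
      next
        case False
        then have iS: "i \<in> S" and jS: "j \<in> S" using i j by auto
        have "(\<Sum>r\<in>S. W r i * cnj (W r j)) = (\<Sum>r\<in>S. W' r i * cnj (W' r j))"
          using False sS by (intro sum.cong refl) (auto simp: W_def)
        moreover have "A i j - w i * cnj (w j) = (\<Sum>r\<in>S. W' r i * cnj (W' r j))"
          using W' iS jS unfolding A'_def by blast
        ultimately show ?thesis using sumW by (simp add: algebra_simps)
      qed
    qed
  qed
qed



lemma quad:
  assumes A: "A \<in> carrier_mat d d" and v: "v \<in> carrier_vec d"
  shows "conjugate v \<bullet> (A *\<^sub>v v) = qf {..<d} (\<lambda>i j. A $$ (i,j)) (\<lambda>i. v $ i)"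
proof -
  have "conjugate v \<bullet> (A *\<^sub>v v) = (\<Sum>i<d. cnj (v $ i) * (\<Sum>j<d. A $$ (i,j) * v $ j))"
    using A v by (simp add: scalar_prod_def lessThan_atLeast0)
  also have "\<dots> = qf {..<d} (\<lambda>i j. A $$ (i,j)) (\<lambda>i. v $ i)"
    unfolding qf_def by (simp add: sum_distrib_left mult.assoc)
  finally show ?thesis .
qed

lemma qf_support:
  assumes "finite S" "T \<subseteq> S" "\<And>k. k \<in> S - T \<Longrightarrow> v k = 0"
  shows "qf S A v = qf T A v"
proof -
  have "qf S A v = (\<Sum>i\<in>T. \<Sum>j\<in>S. cnj (v i) * A i j * v j)"
    unfolding qf_def using assms by (intro sum.mono_neutral_right) auto
  also have "\<dots> = qf T A v"
    unfolding qf_def using assms by (intro sum.cong refl sum.mono_neutral_right) auto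
  finally show ?thesis .
qed

lemma psd_fun:
  assumes "psd d A"
  shows "Im (qf {..<d} (\<lambda>i j. A $$ (i,j)) v) = 0 \<and> 0 \<le> Re (qf {..<d} (\<lambda>i j. A $$ (i,j)) v)"
proof -
  have A: "A \<in> carrier_mat d d" using assms by (simp add: psd_def)
  have vc: "vec d v \<in> carrier_vec d" by simp
  have "qf {..<d} (\<lambda>i j. A $$ (i,j)) v = qf {..<d} (\<lambda>i j. A $$ (i,j)) (\<lambda>i. vec d v $ i)"
    by (rule qf_cong) simp
  also have "\<dots> = conjugate (vec d v) \<bullet> (A *\<^sub>v vec d v)" using quad[OF A vc] by simp
  finally show ?thesis using assms vc unfolding psd_def by metis
qed

lemma qf_two:
  assumes "i \<noteq> j"
  shows "qf {i,j} A (\<lambda>k. if k = i then a else if k = j then b else 0)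
    = cnj a * A i i * a + cnj a * A i j * b + cnj b * A j i * a + cnj b * A j j * b"
  using assms unfolding qf_def by (simp add: algebra_simps)

lemma qf_one:
  "qf {i} A (\<lambda>k. if k = i then a else 0) = cnj a * A i i * a"
  unfolding qf_def by simp

lemma psd_herm:
  assumes "psd d A" "i < d" "j < d"
  shows "A $$ (j,i) = cnj (A $$ (i,j))"
proof -
  let ?A = "\<lambda>i j. A $$ (i,j)"
  have P: "Im (qf {..<d} ?A v) = 0" for v using psd_fun[OF assms(1)] by blast
  have diag: "Im (A $$ (k,k)) = 0" if "k < d" for k
  proof -
    have "qf {..<d} ?A (\<lambda>l. if l = k then 1 else 0) = qf {k} ?A (\<lambda>l. if l = k then 1 else 0)"
      using that by (intro qf_support) auto
    then show ?thesis using P[of "\<lambda>l. if l = k then 1 else 0"] qf_one[of k ?A 1] by simp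
  qed
  show ?thesis
  proof (cases "i = j")
    case True then show ?thesis using diag[OF assms(2)] by (simp add: complex_eq_iff)
  next
    case False
    have two: "qf {..<d} ?A (\<lambda>k. if k = i then a else if k = j then b else 0)
       = cnj a * A $$ (i,i) * a + cnj a * A $$ (i,j) * b + cnj b * A $$ (j,i) * a + cnj b * A $$ (j,j) * b" for a b
    proof -
      have "qf {..<d} ?A (\<lambda>k. if k = i then a else if k = j then b else 0)
          = qf {i,j} ?A (\<lambda>k. if k = i then a else if k = j then b else 0)"
        using assms by (intro qf_support) auto
      then show ?thesis using qf_two[OF False, of ?A a b] by simp
    qed
    have e1: "Im (A $$ (i,j)) + Im (A $$ (j,i)) = 0"
      using P[of "\<lambda>k. if k = i then 1 else if k = j then 1 else 0"] two[of 1 1] diag[OF assms(2)] diag[OF assms(3)]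
      by simp
    have e2: "Re (A $$ (i,j)) - Re (A $$ (j,i)) = 0"
      using P[of "\<lambda>k. if k = i then 1 else if k = j then \<i> else 0"] two[of 1 \<i>] diag[OF assms(2)] diag[OF assms(3)]
      by simp
    show ?thesis using e1 e2 by (simp add: complex_eq_iff)
  qed
qed

lemma psd_gram:
  assumes "psd d A"
  shows "\<exists>W. \<forall>i<d. \<forall>j<d. A $$ (i,j) = (\<Sum>r<d. W r i * cnj (W r j))"
proof -
  have h: "\<forall>i\<in>{..<d}. \<forall>j\<in>{..<d}. A $$ (j,i) = cnj (A $$ (i,j))"
    using psd_herm[OF assms] by blast
  have p: "\<forall>v. 0 \<le> Re (qf {..<d} (\<lambda>i j. A $$ (i,j)) v)" using psd_fun[OF assms] by blast
  show ?thesis using gram[OF _ h p] by auto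
qed

lemma mtrace_mult:
  assumes "A \<in> carrier_mat d d" "B \<in> carrier_mat d d"
  shows "mtrace (A * B) = (\<Sum>i<d. \<Sum>j<d. A $$ (i,j) * B $$ (j,i))"
  using assms unfolding mtrace_def by (simp add: scalar_prod_def lessThan_atLeast0)

lemma kron_carrier: "A \<in> carrier_mat a a \<Longrightarrow> B \<in> carrier_mat b b \<Longrightarrow> kron A B \<in> carrier_mat (a*b) (a*b)"
  unfolding kron_def by auto

lemma kron_entry:
  assumes "A \<in> carrier_mat a a" "B \<in> carrier_mat b b" "i < a*b" "j < a*b"
  shows "kron A B $$ (i,j) = A $$ (i div b, j div b) * B $$ (i mod b, j mod b)"
  using assms unfolding kron_def by auto



definition Bv :: "nat \<Rightarrow> nat \<Rightarrow> nat \<Rightarrow> complex" where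
  "Bv n k i = pent (dec n k) (i div 2^n) (i mod 2^n)"

definition Bmat :: "nat \<Rightarrow> nat \<Rightarrow> complex mat" where
  "Bmat n k = mat (2^(2*n)) (2^(2*n)) (\<lambda>(i,j). Bv n k i * cnj (Bv n k j) / 2^n)"

lemma D_eq: "(2::nat)^(2*n) = 2^n * 2^n"
  by (simp add: mult_2 power_add)

lemma divN: "(i::nat) < 2^n * 2^n \<Longrightarrow> i div 2^n < 2^n"
  by (simp add: less_mult_imp_div_less)

lemma dm_eq: "(x::nat) = y \<longleftrightarrow> x div m = y div m \<and> x mod m = y mod m"
  by (metis div_mult_mod_eq)

lemma lamw_rep0: "length Q = n \<Longrightarrow> lamw (replicate n 0) Q = 1"
proof (induction n arbitrary: Q)
  case 0 then show ?case by simp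
next
  case (Suc n)
  then obtain q Q' where "Q = q # Q'" "length Q' = n" by (cases Q) auto
  then show ?case using Suc.IH by (simp add: lam1_def)
qed

lemma pent_rep0: "x < 2^n \<Longrightarrow> y < 2^n \<Longrightarrow> pent (replicate n 0) x y = (if x = y then 1 else 0)"
proof (induction n arbitrary: x y)
  case 0 then show ?case by simp
next
  case (Suc n)
  have xd: "x div 2^n < 2" "y div 2^n < 2" using Suc.prems by (auto intro: div_lt2)
  have "pent (replicate (Suc n) 0) x y = pauli 0 $$ (x div 2^n, y div 2^n) * pent (replicate n 0) (x mod 2^n) (y mod 2^n)"
    by simp
  also have "\<dots> = (if x div 2^n = y div 2^n then 1 else 0) * (if x mod 2^n = y mod 2^n then 1 else 0)"
    using xd Suc.IH[of "x mod 2^n" "y mod 2^n"] by (simp add: pauli_entry)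
  also have "\<dots> = (if x = y then 1 else 0)"
    using dm_eq[of x y "2^n"] by auto
  finally show ?case .
qed

lemma compl:
  assumes "i < 2^n * 2^n" "j < 2^n * 2^n"
  shows "(\<Sum>k<4^n. Bv n k i * cnj (Bv n k j)) = 2^n * (if i = j then 1 else 0)"
proof -
  have b: "i div 2^n < 2^n" "j div 2^n < 2^n" using assms by (auto intro: divN)
  have "(\<Sum>k<4^n. Bv n k i * cnj (Bv n k j))
     = (\<Sum>k<4^n. complex_of_real (lamw (replicate n 0) (dec n k)) * pent (dec n k) (i div 2^n) (i mod 2^n)
            * cnj (pent (dec n k) (j div 2^n) (j mod 2^n)))"
    unfolding Bv_def by (intro sum.cong refl) (simp add: lamw_rep0)
  also have "\<dots> = 2^n * pent (replicate n 0) (i div 2^n) (j div 2^n) * pent (replicate n 0) (i mod 2^n) (j mod 2^n)"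
    using ID[of "i div 2^n" "replicate n 0" "i mod 2^n" "j div 2^n" "j mod 2^n"] b by simp
  also have "\<dots> = 2^n * (if i = j then 1 else 0)"
    using b dm_eq[of i j "2^n"] by (simp add: pent_rep0)
  finally show ?thesis .
qed

lemma lamsum:
  assumes "i < 2^n * 2^n" "j < 2^n * 2^n" "length P = n"
  shows "(\<Sum>k<4^n. complex_of_real (lamw P (dec n k)) * Bv n k i * cnj (Bv n k j))
     = 2^n * pent P (i div 2^n) (j div 2^n) * pent P (i mod 2^n) (j mod 2^n)"
proof -
  have b: "i div 2^n < 2^n" "j div 2^n < 2^n" using assms by (auto intro: divN)
  show ?thesis
    unfolding Bv_def using ID[of "i div 2^n" P "i mod 2^n" "j div 2^n" "j mod 2^n"] b assms(3) by simp
qed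



lemma Bmat_carrier: "Bmat n k \<in> carrier_mat (2^(2*n)) (2^(2*n))"
  unfolding Bmat_def by simp

lemma Bmat_psd: "psd (2^(2*n)) (Bmat n k)"
  unfolding psd_def
proof (intro conjI ballI Bmat_carrier)
  fix v :: "complex vec" assume v: "v \<in> carrier_vec (2^(2*n))"
  define d where "d = (2::nat)^(2*n)"
  define u where "u i = Bv n k i" for i
  define z where "z = (\<Sum>i<d. cnj (v $ i) * u i)"
  have "conjugate v \<bullet> (Bmat n k *\<^sub>v v) = qf {..<d} (\<lambda>i j. Bmat n k $$ (i,j)) (\<lambda>i. v $ i)"
    unfolding d_def by (rule quad[OF Bmat_carrier v])
  also have "\<dots> = (\<Sum>i<d. \<Sum>j<d. (cnj (v $ i) * u i) * (cnj (u j) * v $ j) / 2^n)"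
    unfolding qf_def by (intro sum.cong refl) (simp add: Bmat_def d_def u_def)
  also have "\<dots> = z * (\<Sum>j<d. cnj (u j) * v $ j) / 2^n"
    unfolding z_def by (simp add: sum_product sum_divide_distrib)
  also have "(\<Sum>j<d. cnj (u j) * v $ j) = cnj z"
    unfolding z_def by (simp add: mult.commute)
  also have "z * cnj z / 2^n = complex_of_real ((cmod z)^2 / 2^n)"
    using cnorm_sq[of z] by simp
  finally have e: "conjugate v \<bullet> (Bmat n k *\<^sub>v v) = complex_of_real ((cmod z)^2 / 2^n)" .
  show "Im (conjugate v \<bullet> (Bmat n k *\<^sub>v v)) = 0" using e by simp
  show "0 \<le> Re (conjugate v \<bullet> (Bmat n k *\<^sub>v v))" using e by simp
qed

lemma Bmat_povm: "is_povm (2^(2*n)) (4^n) (Bmat n)"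
  unfolding is_povm_def
proof (intro conjI allI impI Bmat_psd)
  fix i j :: nat assume i: "i < 2^(2*n)" and j: "j < 2^(2*n)"
  have "(\<Sum>k<4^n. Bmat n k $$ (i,j)) = (\<Sum>k<4^n. Bv n k i * cnj (Bv n k j)) / 2^n"
    using i j by (simp add: Bmat_def sum_divide_distrib)
  also have "\<dots> = (if i = j then 1 else 0)"
    using compl[of i n j] i j by (simp add: D_eq)
  finally show "(\<Sum>k<4^n. Bmat n k $$ (i,j)) = 1\<^sub>m (2^(2*n)) $$ (i,j)" using i j by simp
qed

definition sig :: "complex mat \<Rightarrow> nat \<Rightarrow> nat \<Rightarrow> nat \<Rightarrow> complex" where
  "sig \<rho> N j i = \<rho> $$ (j div N, i div N) * \<rho> $$ (j mod N, i mod N)"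

lemma trk:
  assumes "\<rho> \<in> carrier_mat (2^n) (2^n)"
  shows "mtrace (Bmat n k * kron \<rho> \<rho>) =
    (\<Sum>i<2^n*2^n. \<Sum>j<2^n*2^n. Bv n k i * cnj (Bv n k j) * sig \<rho> (2^n) j i) / 2^n"
proof -
  have K: "kron \<rho> \<rho> \<in> carrier_mat (2^n*2^n) (2^n*2^n)" by (rule kron_carrier[OF assms assms])
  have B: "Bmat n k \<in> carrier_mat (2^n*2^n) (2^n*2^n)" using Bmat_carrier[of n k] by (simp add: D_eq)
  have "mtrace (Bmat n k * kron \<rho> \<rho>) = (\<Sum>i<2^n*2^n. \<Sum>j<2^n*2^n. Bmat n k $$ (i,j) * kron \<rho> \<rho> $$ (j,i))"
    by (rule mtrace_mult[OF B K])
  also have "\<dots> = (\<Sum>i<2^n*2^n. \<Sum>j<2^n*2^n. Bv n k i * cnj (Bv n k j) * sig \<rho> (2^n) j i / 2^n)"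
    by (intro sum.cong refl) (simp add: Bmat_def D_eq kron_entry[OF assms assms] sig_def)
  finally show ?thesis by (simp add: sum_divide_distrib)
qed



lemma dmN: "(y::nat) < N \<Longrightarrow> (x*N+y) div N = x" "(y::nat) < N \<Longrightarrow> (x*N+y) mod N = y"
  by auto

lemma split1:
  fixes g :: "nat \<Rightarrow> nat \<Rightarrow> 'a::comm_monoid_add"
  shows "(\<Sum>i<N*N. g (i div N) (i mod N)) = (\<Sum>x<N. \<Sum>y<N. g x y)"
  by (simp add: sum_split dmN)

lemma split2:
  fixes F :: "nat \<Rightarrow> nat \<Rightarrow> nat \<Rightarrow> nat \<Rightarrow> 'a::comm_monoid_add"
  shows "(\<Sum>i<N*N. \<Sum>j<N*N. F (i div N) (i mod N) (j div N) (j mod N))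
    = (\<Sum>x<N. \<Sum>y<N. \<Sum>x'<N. \<Sum>y'<N. F x y x' y')"
proof -
  have "(\<Sum>i<N*N. \<Sum>j<N*N. F (i div N) (i mod N) (j div N) (j mod N))
     = (\<Sum>i<N*N. \<Sum>x'<N. \<Sum>y'<N. F (i div N) (i mod N) x' y')"
    by (rule sum.cong[OF refl]) (rule split1)
  also have "\<dots> = (\<Sum>x<N. \<Sum>y<N. \<Sum>x'<N. \<Sum>y'<N. F x y x' y')"
    by (rule split1)
  finally show ?thesis .
qed

lemma swap4:
  "(\<Sum>i\<in>A. \<Sum>j\<in>B. \<Sum>r\<in>C. \<Sum>s\<in>D. f i j r s) = (\<Sum>r\<in>C. \<Sum>s\<in>D. \<Sum>i\<in>A. \<Sum>j\<in>B. (f i j r s :: 'a::comm_monoid_add))"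
proof -
  have "(\<Sum>i\<in>A. \<Sum>j\<in>B. \<Sum>r\<in>C. \<Sum>s\<in>D. f i j r s) = (\<Sum>i\<in>A. \<Sum>r\<in>C. \<Sum>j\<in>B. \<Sum>s\<in>D. f i j r s)"
    by (rule sum.cong[OF refl], rule sum.swap)
  also have "\<dots> = (\<Sum>i\<in>A. \<Sum>r\<in>C. \<Sum>s\<in>D. \<Sum>j\<in>B. f i j r s)"
    by (rule sum.cong[OF refl], rule sum.cong[OF refl], rule sum.swap)
  also have "\<dots> = (\<Sum>r\<in>C. \<Sum>i\<in>A. \<Sum>s\<in>D. \<Sum>j\<in>B. f i j r s)"
    by (rule sum.swap)
  also have "\<dots> = (\<Sum>r\<in>C. \<Sum>s\<in>D. \<Sum>i\<in>A. \<Sum>j\<in>B. f i j r s)"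
    by (rule sum.cong[OF refl], rule sum.swap)
  finally show ?thesis .
qed

lemma swap3:
  "(\<Sum>k\<in>K. \<Sum>i\<in>A. \<Sum>j\<in>B. f k i j) = (\<Sum>i\<in>A. \<Sum>j\<in>B. \<Sum>k\<in>K. (f k i j :: 'a::comm_monoid_add))"
proof -
  have "(\<Sum>k\<in>K. \<Sum>i\<in>A. \<Sum>j\<in>B. f k i j) = (\<Sum>i\<in>A. \<Sum>k\<in>K. \<Sum>j\<in>B. f k i j)"
    by (rule sum.swap)
  also have "\<dots> = (\<Sum>i\<in>A. \<Sum>j\<in>B. \<Sum>k\<in>K. f k i j)"
    by (rule sum.cong[OF refl], rule sum.swap)
  finally show ?thesis .
qed

lemma density_carrier: "density n \<rho> \<Longrightarrow> \<rho> \<in> carrier_mat (2^n) (2^n)"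
  by (simp add: density_def psd_def)

lemma tr_nonneg:
  assumes dens: "density n \<rho>"
  shows "0 \<le> Re (mtrace (Bmat n k * kron \<rho> \<rho>))"
proof -
  define N where "N = (2::nat)^n"
  have rc: "\<rho> \<in> carrier_mat N N" using density_carrier[OF dens] by (simp add: N_def)
  have ps: "psd N \<rho>" using dens by (simp add: density_def N_def)
  obtain W where W: "\<forall>a<N. \<forall>b<N. \<rho> $$ (a,b) = (\<Sum>r<N. W r a * cnj (W r b))"
    using psd_gram[OF ps] by blast
  define u where "u i = Bv n k i" for i
  define \<alpha> where "\<alpha> r s j = cnj (u j) * W r (j div N) * W s (j mod N)" for r s j
  define Z where "Z r s = (\<Sum>j<N*N. \<alpha> r s j)" for r s
  have step1: "u i * cnj (u j) * sig \<rho> N j i = (\<Sum>r<N. \<Sum>s<N. \<alpha> r s j * cnj (\<alpha> r s i))"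
    if i: "i < N*N" and j: "j < N*N" for i j
  proof -
    have b: "i div N < N" "j div N < N" "i mod N < N" "j mod N < N"
      using i j unfolding N_def by (auto intro: divN)
    have "sig \<rho> N j i = (\<Sum>r<N. W r (j div N) * cnj (W r (i div N))) * (\<Sum>s<N. W s (j mod N) * cnj (W s (i mod N)))"
      unfolding sig_def using W b by simp
    also have "\<dots> = (\<Sum>r<N. \<Sum>s<N. W r (j div N) * cnj (W r (i div N)) * (W s (j mod N) * cnj (W s (i mod N))))"
      by (rule sum_product)
    finally have "u i * cnj (u j) * sig \<rho> N j i
       = (\<Sum>r<N. \<Sum>s<N. u i * cnj (u j) * (W r (j div N) * cnj (W r (i div N)) * (W s (j mod N) * cnj (W s (i mod N)))))"
      by (simp add: sum_distrib_left)
    also have "\<dots> = (\<Sum>r<N. \<Sum>s<N. \<alpha> r s j * cnj (\<alpha> r s i))"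
      unfolding \<alpha>_def by (intro sum.cong refl) (simp add: algebra_simps)
    finally show ?thesis .
  qed
  have "(\<Sum>i<N*N. \<Sum>j<N*N. u i * cnj (u j) * sig \<rho> N j i)
      = (\<Sum>i<N*N. \<Sum>j<N*N. \<Sum>r<N. \<Sum>s<N. \<alpha> r s j * cnj (\<alpha> r s i))"
    using step1 by (intro sum.cong refl) auto
  also have "\<dots> = (\<Sum>r<N. \<Sum>s<N. \<Sum>i<N*N. \<Sum>j<N*N. \<alpha> r s j * cnj (\<alpha> r s i))"
    by (rule swap4)
  also have "\<dots> = (\<Sum>r<N. \<Sum>s<N. complex_of_real ((cmod (Z r s))^2))"
  proof (intro sum.cong refl)
    fix r s
    have "(\<Sum>i<N*N. \<Sum>j<N*N. \<alpha> r s j * cnj (\<alpha> r s i)) = (\<Sum>i<N*N. cnj (\<alpha> r s i)) * Z r s"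
      unfolding Z_def sum_product by (rule sum.cong[OF refl], rule sum.cong[OF refl], rule mult.commute)
    also have "\<dots> = complex_of_real ((cmod (Z r s))^2)"
      unfolding Z_def using cnorm_sq[of "\<Sum>j<N*N. \<alpha> r s j"] by (simp add: mult.commute)
    finally show "(\<Sum>i<N*N. \<Sum>j<N*N. \<alpha> r s j * cnj (\<alpha> r s i)) = complex_of_real ((cmod (Z r s))^2)" .
  qed
  finally have S: "(\<Sum>i<N*N. \<Sum>j<N*N. u i * cnj (u j) * sig \<rho> N j i) = complex_of_real (\<Sum>r<N. \<Sum>s<N. (cmod (Z r s))^2)"
    by simp
  have "mtrace (Bmat n k * kron \<rho> \<rho>) = complex_of_real (\<Sum>r<N. \<Sum>s<N. (cmod (Z r s))^2) / 2^n"
    using trk[OF density_carrier[OF dens], of k] S unfolding u_def N_def by simp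
  then show ?thesis by (simp add: sum_nonneg)
qed



lemma tr_sum:
  assumes dens: "density n \<rho>"
  shows "(\<Sum>k<4^n. mtrace (Bmat n k * kron \<rho> \<rho>)) = 1"
proof -
  define N where "N = (2::nat)^n"
  have rc: "\<rho> \<in> carrier_mat N N" using density_carrier[OF dens] by (simp add: N_def)
  have tr1: "mtrace \<rho> = 1" using dens by (simp add: density_def)
  have "(\<Sum>k<4^n. mtrace (Bmat n k * kron \<rho> \<rho>))
      = (\<Sum>k<4^n. \<Sum>i<N*N. \<Sum>j<N*N. Bv n k i * cnj (Bv n k j) * sig \<rho> N j i) / N"
    using trk[OF density_carrier[OF dens]] by (simp add: N_def sum_divide_distrib)
  also have "(\<Sum>k<4^n. \<Sum>i<N*N. \<Sum>j<N*N. Bv n k i * cnj (Bv n k j) * sig \<rho> N j i)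
      = (\<Sum>i<N*N. \<Sum>j<N*N. \<Sum>k<4^n. Bv n k i * cnj (Bv n k j) * sig \<rho> N j i)"
    by (rule swap3)
  also have "\<dots> = (\<Sum>i<N*N. \<Sum>j<N*N. N * (if i = j then 1 else 0) * sig \<rho> N j i)"
  proof (intro sum.cong refl)
    fix i j assume "i \<in> {..<N*N}" "j \<in> {..<N*N}"
    then show "(\<Sum>k<4^n. Bv n k i * cnj (Bv n k j) * sig \<rho> N j i) = N * (if i = j then 1 else 0) * sig \<rho> N j i"
      using compl[of i n j] by (simp add: N_def sum_distrib_right[symmetric])
  qed
  also have "\<dots> = (\<Sum>i<N*N. N * sig \<rho> N i i)"
  proof (intro sum.cong refl)
    fix i assume i: "i \<in> {..<N*N}"
    have "(\<Sum>j<N*N. N * (if i = j then 1 else 0) * sig \<rho> N j i) = (\<Sum>j<N*N. if j = i then N * sig \<rho> N j i else 0)"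
      by (intro sum.cong refl) auto
    also have "\<dots> = N * sig \<rho> N i i" using i by (simp add: sum.delta')
    finally show "(\<Sum>j<N*N. N * (if i = j then 1 else 0) * sig \<rho> N j i) = N * sig \<rho> N i i" .
  qed
  also have "\<dots> = N * (\<Sum>i<N*N. sig \<rho> N i i)"
    by (simp add: sum_distrib_left)
  also have "(\<Sum>i<N*N. sig \<rho> N i i) = (\<Sum>x<N. \<Sum>y<N. \<rho> $$ (x,x) * \<rho> $$ (y,y))"
    unfolding sig_def by (rule split1)
  also have "\<dots> = mtrace \<rho> * mtrace \<rho>"
    using rc unfolding mtrace_def by (simp add: sum_product)
  finally show ?thesis using tr1 by (simp add: N_def)
qed

lemma pauli_carrier: "pauli_obs P \<in> carrier_mat (2^length P) (2^length P)"
  by (simp add: carrier_matI)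

lemma tr_pauli:
  assumes rc: "\<rho> \<in> carrier_mat (2^length P) (2^length P)"
  shows "mtrace (pauli_obs P * \<rho>) = (\<Sum>x<2^length P. \<Sum>x'<2^length P. pent P x x' * \<rho> $$ (x',x))"
  using mtrace_mult[OF pauli_carrier rc] by (simp add: pauli_obs_entry)

lemma tr_pauli_real:
  assumes dens: "density (length P) \<rho>"
  shows "Im (mtrace (pauli_obs P * \<rho>)) = 0"
proof -
  define N where "N = (2::nat)^length P"
  have rc: "\<rho> \<in> carrier_mat N N" using density_carrier[OF dens] by (simp add: N_def)
  have ps: "psd N \<rho>" using dens by (simp add: density_def N_def)
  define t where "t = mtrace (pauli_obs P * \<rho>)"
  have t: "t = (\<Sum>x<N. \<Sum>x'<N. pent P x x' * \<rho> $$ (x',x))"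
    unfolding t_def N_def by (rule tr_pauli) (use rc in \<open>simp add: N_def\<close>)
  have "cnj t = (\<Sum>x<N. \<Sum>x'<N. pent P x' x * \<rho> $$ (x,x'))"
    unfolding t
  proof (simp only: cnj_sum, intro sum.cong refl)
    fix x x' assume "x \<in> {..<N}" "x' \<in> {..<N}"
    then have a: "pent P x' x = cnj (pent P x x')" and b: "\<rho> $$ (x,x') = cnj (\<rho> $$ (x',x))"
      using pent_herm[of x P x'] psd_herm[OF ps, of x' x] by (auto simp: N_def)
    show "cnj (pent P x x' * \<rho> $$ (x',x)) = pent P x' x * \<rho> $$ (x,x')"
      by (simp only: a b complex_cnj_mult)
  qed
  also have "\<dots> = t" unfolding t by (rule sum.swap)
  finally have "cnj t = t" .
  then show ?thesis unfolding t_def by (metis Reals_cnj_iff complex_is_Real_iff)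
qed

lemma tr_lam:
  assumes dens: "density (length P) \<rho>"
  shows "(\<Sum>k<4^length P. complex_of_real (lamw P (dec (length P) k)) * mtrace (Bmat (length P) k * kron \<rho> \<rho>))
      = mtrace (pauli_obs P * \<rho>) * mtrace (pauli_obs P * \<rho>)"
proof -
  define n where "n = length P"
  define N where "N = (2::nat)^n"
  have rc: "\<rho> \<in> carrier_mat N N" using density_carrier[OF dens] by (simp add: N_def n_def)
  define f where "f a b = pent P a b * \<rho> $$ (b,a)" for a b
  have "(\<Sum>k<4^n. complex_of_real (lamw P (dec n k)) * mtrace (Bmat n k * kron \<rho> \<rho>))
      = (\<Sum>k<4^n. \<Sum>i<N*N. \<Sum>j<N*N. complex_of_real (lamw P (dec n k)) * Bv n k i * cnj (Bv n k j) * sig \<rho> N j i) / N"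
    using trk[OF density_carrier[OF dens]]
    by (simp add: N_def n_def sum_divide_distrib sum_distrib_left mult.assoc)
  also have "(\<Sum>k<4^n. \<Sum>i<N*N. \<Sum>j<N*N. complex_of_real (lamw P (dec n k)) * Bv n k i * cnj (Bv n k j) * sig \<rho> N j i)
      = (\<Sum>i<N*N. \<Sum>j<N*N. \<Sum>k<4^n. complex_of_real (lamw P (dec n k)) * Bv n k i * cnj (Bv n k j) * sig \<rho> N j i)"
    by (rule swap3)
  also have "\<dots> = (\<Sum>i<N*N. \<Sum>j<N*N. N * (f (i div N) (j div N) * f (i mod N) (j mod N)))"
  proof (intro sum.cong refl)
    fix i j assume "i \<in> {..<N*N}" "j \<in> {..<N*N}"
    then have ij: "i < 2^n*2^n" "j < 2^n*2^n" by (auto simp: N_def)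
    have "(\<Sum>k<4^n. complex_of_real (lamw P (dec n k)) * Bv n k i * cnj (Bv n k j) * sig \<rho> N j i)
        = (\<Sum>k<4^n. complex_of_real (lamw P (dec n k)) * Bv n k i * cnj (Bv n k j)) * sig \<rho> N j i"
      by (simp add: sum_distrib_right)
    also have "\<dots> = 2^n * pent P (i div 2^n) (j div 2^n) * pent P (i mod 2^n) (j mod 2^n) * sig \<rho> N j i"
      using lamsum[OF ij] n_def by simp
    also have "\<dots> = N * (f (i div N) (j div N) * f (i mod N) (j mod N))"
      unfolding f_def sig_def N_def by (simp add: algebra_simps)
    finally show "(\<Sum>k<4^n. complex_of_real (lamw P (dec n k)) * Bv n k i * cnj (Bv n k j) * sig \<rho> N j i)
        = N * (f (i div N) (j div N) * f (i mod N) (j mod N))" .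
  qed
  also have "\<dots> = N * (\<Sum>i<N*N. \<Sum>j<N*N. f (i div N) (j div N) * f (i mod N) (j mod N))"
    by (simp add: sum_distrib_left)
  also have "(\<Sum>i<N*N. \<Sum>j<N*N. f (i div N) (j div N) * f (i mod N) (j mod N))
       = (\<Sum>x<N. \<Sum>y<N. \<Sum>x'<N. \<Sum>y'<N. f x x' * f y y')"
    by (rule split2[where F = "\<lambda>x y x' y'. f x x' * f y y'"])
  also have "\<dots> = (\<Sum>x<N. \<Sum>x'<N. \<Sum>y<N. \<Sum>y'<N. f x x' * f y y')"
    by (rule sum.cong[OF refl], rule sum.swap)
  also have "\<dots> = (\<Sum>x<N. \<Sum>x'<N. f x x' * (\<Sum>y<N. \<Sum>y'<N. f y y'))"
    by (simp add: sum_distrib_left)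
  also have "\<dots> = (\<Sum>x<N. \<Sum>x'<N. f x x') * (\<Sum>y<N. \<Sum>y'<N. f y y')"
    by (simp add: sum_distrib_right)
  also have "(\<Sum>x<N. \<Sum>x'<N. f x x') = mtrace (pauli_obs P * \<rho>)"
    unfolding f_def N_def n_def by (rule tr_pauli[symmetric]) (use rc in \<open>simp add: N_def n_def\<close>)
  finally show ?thesis by (simp add: n_def N_def)
qed



lemma os_finite: "finite (outcome_seqs T m)"
proof -
  have "outcome_seqs T m = {xs. set xs \<subseteq> {..<m} \<and> length xs = T}"
    unfolding outcome_seqs_def by auto
  then show ?thesis using finite_lists_length_eq[of "{..<m}" T] by simp
qed

lemma os_Suc: "outcome_seqs (Suc T) m = (\<lambda>(x,xs). x#xs) ` ({..<m} \<times> outcome_seqs T m)"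
  unfolding outcome_seqs_def
  by (auto simp: length_Suc_conv image_iff)

lemma os_0: "outcome_seqs 0 m = {[]}"
  unfolding outcome_seqs_def by auto

lemma prodsum:
  fixes g :: "nat \<Rightarrow> real"
  shows "(\<Sum>xs\<in>outcome_seqs T m. \<Prod>t<T. g (xs!t)) = (\<Sum>k<m. g k)^T"
proof (induction T)
  case 0 then show ?case by (simp add: os_0)
next
  case (Suc T)
  have inj: "inj_on (\<lambda>(x,xs). x#xs) ({..<m} \<times> outcome_seqs T m)"
    by (auto simp: inj_on_def)
  have "(\<Sum>xs\<in>outcome_seqs (Suc T) m. \<Prod>t<Suc T. g (xs!t))
      = (\<Sum>(x,xs)\<in>{..<m} \<times> outcome_seqs T m. \<Prod>t<Suc T. g ((x#xs)!t))"
    unfolding os_Suc by (subst sum.reindex[OF inj]) (simp add: case_prod_unfold)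
  also have "\<dots> = (\<Sum>x<m. \<Sum>xs\<in>outcome_seqs T m. g x * (\<Prod>t<T. g (xs!t)))"
  proof -
    have sh: "(\<Prod>t<Suc T. g ((x#xs)!t)) = g x * (\<Prod>t<T. g (xs!t))" for x xs
      by (simp only: prod.lessThan_Suc_shift nth_Cons_0 nth_Cons_Suc)
    show ?thesis unfolding sh by (rule sum.cartesian_product[symmetric])
  qed
  also have "\<dots> = (\<Sum>x<m. g x) * (\<Sum>xs\<in>outcome_seqs T m. \<Prod>t<T. g (xs!t))"
    by (rule sum_product[symmetric])
  finally show ?case using Suc.IH by simp
qed

lemma exp_quad: "\<bar>y::real\<bar> \<le> 1 \<Longrightarrow> exp y \<le> 1 + y + y^2"
proof -
  assume y: "\<bar>y\<bar> \<le> 1"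
  obtain t where t: "\<bar>t\<bar> \<le> \<bar>y\<bar>" and e: "exp y = (\<Sum>m<3. y ^ m / fact m) + exp t / fact 3 * y ^ 3"
    using Maclaurin_exp_le[of y 3] by blast
  have s: "(\<Sum>m<3. y ^ m / fact m) = 1 + y + y^2/2"
    by (simp add: numeral_3_eq_3 power2_eq_square)
  have et: "exp t \<le> 3" using t y exp_le by (meson exp_le_cancel_iff order_trans abs_le_D1)
  have "exp t / fact 3 * y ^ 3 \<le> \<bar>exp t / fact 3 * y ^ 3\<bar>" by (rule abs_ge_self)
  also have "\<dots> = exp t / 6 * \<bar>y\<bar>^3" by (simp add: abs_mult power_abs fact_numeral)
  also have "\<dots> \<le> 3 / 6 * \<bar>y\<bar>^3"
    by (intro mult_right_mono divide_right_mono et) auto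
  also have "\<dots> \<le> 1/2 * y^2"
  proof -
    have "\<bar>y\<bar>^3 \<le> \<bar>y\<bar>^2" using power_decreasing[of 2 3 "\<bar>y\<bar>"] y by simp
    then show ?thesis by (simp add: power2_abs)
  qed
  finally show ?thesis using e s by simp
qed


lemma os_mem: "xs \<in> outcome_seqs T m \<Longrightarrow> t < T \<Longrightarrow> xs ! t < m"
  unfolding outcome_seqs_def by (metis (mono_tags) lessThan_iff mem_Collect_eq nth_mem subsetD)

lemma tail1:
  fixes q X :: "nat \<Rightarrow> real"
  assumes q0: "\<forall>k<m. 0 \<le> q k" and q1: "(\<Sum>k<m. q k) = 1" and Xb: "\<forall>k<m. \<bar>X k\<bar> \<le> 1"
    and eps: "0 < \<epsilon>" "\<epsilon> \<le> 1"
  shows "(\<Sum>xs\<in>outcome_seqs T m. if real T * \<epsilon> \<le> (\<Sum>t<T. X (xs!t)) - real T * (\<Sum>k<m. q k * X k)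
            then (\<Prod>t<T. q (xs!t)) else 0) \<le> exp (- real T * \<epsilon>^2 / 16)"
proof -
  define \<mu> where "\<mu> = (\<Sum>k<m. q k * X k)"
  define l where "l = \<epsilon> / 8"
  have l0: "0 < l" using eps by (simp add: l_def)
  have mu: "\<bar>\<mu>\<bar> \<le> 1"
  proof -
    have "\<bar>\<mu>\<bar> \<le> (\<Sum>k<m. \<bar>q k * X k\<bar>)" unfolding \<mu>_def by (rule sum_abs)
    also have "\<dots> \<le> (\<Sum>k<m. q k)"
      using q0 Xb by (intro sum_mono) (simp add: abs_mult mult_left_le)
    finally show ?thesis using q1 by simp
  qed
  define g where "g k = q k * exp (l * (X k - \<mu>))" for k
  have pt: "(if real T * \<epsilon> \<le> (\<Sum>t<T. X (xs!t)) - real T * \<mu> then (\<Prod>t<T. q (xs!t)) else 0)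
        \<le> exp (- l * T * \<epsilon>) * (\<Prod>t<T. g (xs!t))" if xs: "xs \<in> outcome_seqs T m" for xs
  proof -
    have pr0: "0 \<le> (\<Prod>t<T. q (xs!t))" using q0 os_mem[OF xs] by (intro prod_nonneg) auto
    have "(\<Prod>t<T. g (xs!t)) = (\<Prod>t<T. q (xs!t)) * (\<Prod>t<T. exp (l * (X (xs!t) - \<mu>)))"
      unfolding g_def by (rule prod.distrib)
    also have "(\<Prod>t<T. exp (l * (X (xs!t) - \<mu>))) = exp (\<Sum>t<T. l * (X (xs!t) - \<mu>))"
      by (rule exp_sum[symmetric]) simp
    also have "(\<Sum>t<T. l * (X (xs!t) - \<mu>)) = l * ((\<Sum>t<T. X (xs!t)) - real T * \<mu>)"
      by (simp add: sum_distrib_left sum_subtractf algebra_simps)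
    finally have G: "exp (- l * T * \<epsilon>) * (\<Prod>t<T. g (xs!t))
        = (\<Prod>t<T. q (xs!t)) * exp (l * ((\<Sum>t<T. X (xs!t)) - real T * \<mu> - real T * \<epsilon>))"
      by (simp add: algebra_simps flip: exp_add)
    show ?thesis
    proof (cases "real T * \<epsilon> \<le> (\<Sum>t<T. X (xs!t)) - real T * \<mu>")
      case True
      then have "1 \<le> exp (l * ((\<Sum>t<T. X (xs!t)) - real T * \<mu> - real T * \<epsilon>))"
        using l0 by simp
      then show ?thesis using True G pr0 by (simp add: mult_le_cancel_left1)
    next
      case False
      have "0 \<le> exp (- l * T * \<epsilon>) * (\<Prod>t<T. g (xs!t))" using G pr0 by simp
      then show ?thesis using False by simp
    qed
  qed
  have "(\<Sum>xs\<in>outcome_seqs T m. if real T * \<epsilon> \<le> (\<Sum>t<T. X (xs!t)) - real T * \<mu> then (\<Prod>t<T. q (xs!t)) else 0)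
      \<le> (\<Sum>xs\<in>outcome_seqs T m. exp (- l * T * \<epsilon>) * (\<Prod>t<T. g (xs!t)))"
    by (rule sum_mono) (rule pt)
  also have "\<dots> = exp (- l * T * \<epsilon>) * (\<Sum>k<m. g k)^T"
    by (simp add: sum_distrib_left[symmetric] prodsum)
  also have "(\<Sum>k<m. g k) \<le> exp (4 * l^2)"
  proof -
    have "(\<Sum>k<m. g k) \<le> (\<Sum>k<m. q k * (1 + l * (X k - \<mu>) + (l * (X k - \<mu>))^2))"
    proof (intro sum_mono)
      fix k assume k: "k \<in> {..<m}"
      have "\<bar>X k - \<mu>\<bar> \<le> 2" using Xb k mu by auto
      then have "\<bar>l * (X k - \<mu>)\<bar> \<le> l * 2" using l0 by (simp add: abs_mult)
      also have "\<dots> \<le> 1" using eps unfolding l_def by simp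
      finally have "exp (l * (X k - \<mu>)) \<le> 1 + l * (X k - \<mu>) + (l * (X k - \<mu>))^2" by (rule exp_quad)
      then show "g k \<le> q k * (1 + l * (X k - \<mu>) + (l * (X k - \<mu>))^2)"
        unfolding g_def using q0 k by (simp add: mult_left_mono)
    qed
    also have "\<dots> = (\<Sum>k<m. q k + l * (q k * X k) - l * (q k * \<mu>) + l^2 * (q k * (X k - \<mu>)^2))"
      by (intro sum.cong refl) (simp add: power2_eq_square algebra_simps)
    also have "\<dots> = (\<Sum>k<m. q k) + (\<Sum>k<m. l * (q k * X k)) - (\<Sum>k<m. l * (q k * \<mu>)) + (\<Sum>k<m. l^2 * (q k * (X k - \<mu>)^2))"
      by (simp add: sum.distrib sum_subtractf)
    also have "\<dots> = (\<Sum>k<m. q k) + l * ((\<Sum>k<m. q k * X k) - (\<Sum>k<m. q k) * \<mu>) + l^2 * (\<Sum>k<m. q k * (X k - \<mu>)^2)"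
      by (simp add: sum_distrib_left[symmetric] sum_distrib_right[symmetric] right_diff_distrib)
    also have "\<dots> = 1 + l^2 * (\<Sum>k<m. q k * (X k - \<mu>)^2)"
      using q1 unfolding \<mu>_def by simp
    also have "(\<Sum>k<m. q k * (X k - \<mu>)^2) \<le> (\<Sum>k<m. q k * 4)"
    proof (intro sum_mono mult_left_mono)
      fix k assume k: "k \<in> {..<m}"
      have "\<bar>X k - \<mu>\<bar> \<le> 2" using Xb k mu by auto
      then have "\<bar>X k - \<mu>\<bar>^2 \<le> 2^2" by (intro power_mono) auto
      then show "(X k - \<mu>)^2 \<le> 4" by simp
      show "0 \<le> q k" using q0 k by auto
    qed
    also have "(\<Sum>k<m. q k * 4) = 4" using q1 by (simp add: sum_distrib_right[symmetric])
    finally have "(\<Sum>k<m. g k) \<le> 1 + 4 * l^2" using l0 by (simp add: mult_left_mono)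
    also have "\<dots> \<le> exp (4 * l^2)" using exp_ge_add_one_self[of "4 * l^2"] by simp
    finally show ?thesis .
  qed
  then have "(\<Sum>k<m. g k)^T \<le> exp (4 * l^2)^T"
    by (intro power_mono) (use q0 in \<open>auto simp: g_def intro!: sum_nonneg\<close>)
  then have "exp (- l * T * \<epsilon>) * (\<Sum>k<m. g k)^T \<le> exp (- l * T * \<epsilon>) * exp (4 * l^2)^T"
    by (simp add: mult_left_mono)
  also have "exp (- l * T * \<epsilon>) * exp (4 * l^2)^T = exp (- real T * \<epsilon>^2 / 16)"
    unfolding l_def by (simp add: exp_of_nat_mult[symmetric] mult_exp_exp power2_eq_square field_simps)
  finally show ?thesis unfolding \<mu>_def by simp
qed


lemma conc:
  fixes q :: "nat \<Rightarrow> real" and X :: "nat \<Rightarrow> nat \<Rightarrow> real"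
  assumes q0: "\<forall>k<m. 0 \<le> q k" and q1: "(\<Sum>k<m. q k) = 1"
    and Xb: "\<forall>i<M. \<forall>k<m. \<bar>X i k\<bar> \<le> 1"
    and eps: "0 < \<epsilon>" "\<epsilon> \<le> 1" and T: "0 < T"
    and bnd: "2 * real M * exp (- real T * \<epsilon>^2 / 16) \<le> 1/3"
  shows "2/3 \<le> (\<Sum>xs\<in>outcome_seqs T m.
     if (\<forall>i<M. \<bar>(\<Sum>t<T. X i (xs!t)) / T - (\<Sum>k<m. q k * X i k)\<bar> \<le> \<epsilon>) then (\<Prod>t<T. q (xs!t)) else 0)"
proof -
  define pr where "pr xs = (\<Prod>t<T. q (xs!t))" for xs
  define S where "S i xs = (\<Sum>t<T. X i (xs!t))" for i xs
  define mu where "mu i = (\<Sum>k<m. q k * X i k)" for i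
  define good where "good xs = (\<forall>i<M. \<bar>S i xs / T - mu i\<bar> \<le> \<epsilon>)" for xs
  define A where "A i xs = (if real T * \<epsilon> \<le> S i xs - real T * mu i then pr xs else 0)" for i xs
  define B where "B i xs = (if real T * \<epsilon> \<le> (\<Sum>t<T. - X i (xs!t)) - real T * (\<Sum>k<m. q k * - X i k) then pr xs else 0)" for i xs
  have pr0: "0 \<le> pr xs" if "xs \<in> outcome_seqs T m" for xs
    unfolding pr_def using q0 os_mem[OF that] by (intro prod_nonneg) auto
  have tot: "(\<Sum>xs\<in>outcome_seqs T m. pr xs) = 1" unfolding pr_def using prodsum[of q T m] q1 by simp
  have bad: "(if good xs then 0 else pr xs) \<le> (\<Sum>i<M. A i xs + B i xs)" if xs: "xs \<in> outcome_seqs T m" for xs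
  proof (cases "good xs")
    case True
    have "0 \<le> (\<Sum>i<M. A i xs + B i xs)" using pr0[OF xs] by (intro sum_nonneg) (auto simp: A_def B_def)
    then show ?thesis using True by simp
  next
    case False
    then obtain i where i: "i < M" and gt: "\<bar>S i xs / T - mu i\<bar> > \<epsilon>" unfolding good_def by auto
    have Tp: "real T > 0" using T by simp
    have "\<bar>S i xs - real T * mu i\<bar> = real T * \<bar>S i xs / T - mu i\<bar>"
      using Tp by (simp add: field_simps abs_mult[symmetric])
    then have "\<bar>S i xs - real T * mu i\<bar> \<ge> real T * \<epsilon>" using gt Tp by simp
    then have "A i xs + B i xs \<ge> pr xs"
    proof (cases "S i xs - real T * mu i \<ge> 0")
      case True
      then have "A i xs = pr xs" using \<open>\<bar>S i xs - real T * mu i\<bar> \<ge> real T * \<epsilon>\<close> unfolding A_def by simp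
      moreover have "B i xs \<ge> 0" using pr0[OF xs] unfolding B_def by simp
      ultimately show ?thesis by simp
    next
      case False
      have "(\<Sum>t<T. - X i (xs!t)) - real T * (\<Sum>k<m. q k * - X i k) = - (S i xs - real T * mu i)"
        unfolding S_def mu_def by (simp add: sum_negf)
      then have "B i xs = pr xs" using False \<open>\<bar>S i xs - real T * mu i\<bar> \<ge> real T * \<epsilon>\<close> unfolding B_def by simp
      moreover have "A i xs \<ge> 0" using pr0[OF xs] unfolding A_def by simp
      ultimately show ?thesis by simp
    qed
    moreover have "(\<Sum>i'<M. A i' xs + B i' xs) \<ge> A i xs + B i xs"
      using i pr0[OF xs] by (intro member_le_sum) (auto simp: A_def B_def)
    ultimately show ?thesis using False by simp
  qed
  have sumbad: "(\<Sum>xs\<in>outcome_seqs T m. if good xs then 0 else pr xs) \<le> 1/3"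
  proof -
    have "(\<Sum>xs\<in>outcome_seqs T m. if good xs then 0 else pr xs) \<le> (\<Sum>xs\<in>outcome_seqs T m. \<Sum>i<M. A i xs + B i xs)"
      by (rule sum_mono) (rule bad)
    also have "\<dots> = (\<Sum>i<M. (\<Sum>xs\<in>outcome_seqs T m. A i xs) + (\<Sum>xs\<in>outcome_seqs T m. B i xs))"
      by (simp add: sum.swap[of _ "outcome_seqs T m"] sum.distrib)
    also have "\<dots> \<le> (\<Sum>i<M. exp (- real T * \<epsilon>^2 / 16) + exp (- real T * \<epsilon>^2 / 16))"
    proof (rule sum_mono)
      fix i assume "i \<in> {..<M}"
      then have Xi: "\<forall>k<m. \<bar>X i k\<bar> \<le> 1" and Xi': "\<forall>k<m. \<bar>- X i k\<bar> \<le> 1" using Xb by auto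
      have a: "(\<Sum>xs\<in>outcome_seqs T m. A i xs) \<le> exp (- real T * \<epsilon>^2 / 16)"
        using tail1[OF q0 q1 Xi eps, of T] unfolding A_def pr_def S_def mu_def .
      have b: "(\<Sum>xs\<in>outcome_seqs T m. B i xs) \<le> exp (- real T * \<epsilon>^2 / 16)"
        using tail1[OF q0 q1 Xi' eps, of T] unfolding B_def pr_def .
      show "(\<Sum>xs\<in>outcome_seqs T m. A i xs) + (\<Sum>xs\<in>outcome_seqs T m. B i xs)
          \<le> exp (- real T * \<epsilon>^2 / 16) + exp (- real T * \<epsilon>^2 / 16)" using a b by simp
    qed
    also have "\<dots> = 2 * real M * exp (- real T * \<epsilon>^2 / 16)" by simp
    finally show ?thesis using bnd by simp
  qed
  have "(\<Sum>xs\<in>outcome_seqs T m. if good xs then pr xs else 0)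
      = (\<Sum>xs\<in>outcome_seqs T m. pr xs) - (\<Sum>xs\<in>outcome_seqs T m. if good xs then 0 else pr xs)"
    by (simp add: sum_subtractf[symmetric] if_distrib cong: if_cong)
  then have "2/3 \<le> (\<Sum>xs\<in>outcome_seqs T m. if good xs then pr xs else 0)"
    using tot sumbad by simp
  then show ?thesis unfolding good_def pr_def S_def mu_def .
qed



lemma lamw_bound: "\<bar>lamw P Q\<bar> \<le> 1"
proof (induction P Q rule: lamw.induct)
  case (1 p P q Q)
  have "\<bar>lam1 p q\<bar> = 1" by (simp add: lam1_def)
  then show ?case using 1 by (simp add: abs_mult)
qed auto

lemma qpack:
  assumes dens: "density n \<rho>" and len: "length P = n"
  shows "\<forall>k. 0 \<le> Re (mtrace (Bmat n k * kron \<rho> \<rho>))"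
    and "(\<Sum>k<4^n. Re (mtrace (Bmat n k * kron \<rho> \<rho>))) = 1"
    and "(\<Sum>k<4^n. Re (mtrace (Bmat n k * kron \<rho> \<rho>)) * lamw P (dec n k))
          = (cmod (mtrace (pauli_obs P * \<rho>)))^2"
proof -
  show "\<forall>k. 0 \<le> Re (mtrace (Bmat n k * kron \<rho> \<rho>))" using tr_nonneg[OF dens] by blast
  show "(\<Sum>k<4^n. Re (mtrace (Bmat n k * kron \<rho> \<rho>))) = 1"
    using arg_cong[OF tr_sum[OF dens], of Re] by (simp add: Re_sum)
  have d: "density (length P) \<rho>" using dens len by simp
  define t where "t = mtrace (pauli_obs P * \<rho>)"
  have it: "Im t = 0" unfolding t_def by (rule tr_pauli_real[OF d])
  have "(\<Sum>k<4^n. Re (mtrace (Bmat n k * kron \<rho> \<rho>)) * lamw P (dec n k))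
      = Re (\<Sum>k<4^n. complex_of_real (lamw P (dec n k)) * mtrace (Bmat n k * kron \<rho> \<rho>))"
    by (simp add: Re_sum mult.commute)
  also have "\<dots> = Re (t * t)" using tr_lam[OF d] len unfolding t_def by simp
  also have "\<dots> = (cmod t)^2" using it by (simp add: cmod_def power2_eq_square)
  finally show "(\<Sum>k<4^n. Re (mtrace (Bmat n k * kron \<rho> \<rho>)) * lamw P (dec n k))
          = (cmod (mtrace (pauli_obs P * \<rho>)))^2" unfolding t_def .
qed

lemma target_le1:
  assumes dens: "density n \<rho>" and len: "length P = n"
  shows "(cmod (mtrace (pauli_obs P * \<rho>)))^2 \<le> 1"
proof -
  note Q = qpack[OF dens len]
  have "(cmod (mtrace (pauli_obs P * \<rho>)))^2 = (\<Sum>k<4^n. Re (mtrace (Bmat n k * kron \<rho> \<rho>)) * lamw P (dec n k))"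
    using Q(3) by simp
  also have "\<dots> \<le> (\<Sum>k<4^n. Re (mtrace (Bmat n k * kron \<rho> \<rho>)))"
  proof (rule sum_mono)
    fix k
    have "lamw P (dec n k) \<le> 1" using lamw_bound[of P "dec n k"] by simp
    then show "Re (mtrace (Bmat n k * kron \<rho> \<rho>)) * lamw P (dec n k) \<le> Re (mtrace (Bmat n k * kron \<rho> \<rho>))"
      using Q(1) by (simp add: mult_left_le)
  qed
  also have "\<dots> = 1" using Q(2) .
  finally show ?thesis .
qed

lemma ln_half: "1/2 \<le> ln (2::real)"
proof -
  have "exp (1/2) \<le> (2::real)" by (rule exp_half_le2)
  then have "ln (exp (1/2)) \<le> ln (2::real)" by (subst ln_le_cancel_iff) auto
  then show ?thesis by simp
qed



lemma Tbound:
  assumes M: "1 \<le> M" and eps: "0 < \<epsilon>" "\<epsilon> < 1"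
  defines "T \<equiv> nat \<lceil>16 * ln (6 * real M) / \<epsilon>^2\<rceil>"
  shows "real (2*T) \<le> 200 * ln (real M + 1) / \<epsilon>^2" and "0 < T"
    and "2 * real M * exp (- real T * \<epsilon>^2 / 16) \<le> 1/3"
proof -
  define x where "x = 16 * ln (6 * real M) / \<epsilon>^2"
  define L where "L = ln (real M + 1)"
  have "\<epsilon> * \<epsilon> < 1 * 1" by (rule mult_strict_mono) (use eps in auto)
  then have e2: "0 < \<epsilon>^2" "\<epsilon>^2 < 1" using eps by (auto simp: power2_eq_square)
  have lnpos: "0 < ln (6 * real M)" using M by simp
  have xpos: "0 < x" unfolding x_def using lnpos e2 by simp
  have Tx: "x \<le> real T" unfolding T_def x_def[symmetric] by (rule real_nat_ceiling_ge)
  have Tx1: "real T \<le> x + 1"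
    unfolding T_def x_def[symmetric] using xpos of_int_ceiling_le_add_one[of x] by simp
  have L2: "ln 2 \<le> L" unfolding L_def using M by simp
  have Lh: "1/2 \<le> L" using L2 ln_half by simp
  have "ln (6 * real M) = ln 6 + ln (real M)" using M by (simp add: ln_mult)
  also have "ln (6::real) \<le> ln 8" by simp
  also have "ln (8::real) = 3 * ln 2" using ln_realpow[of 2 3] by simp
  also have "ln (real M) \<le> L" unfolding L_def using M by simp
  finally have l6: "ln (6 * real M) \<le> 4 * L" using L2 by simp
  have "x \<le> 64 * L / \<epsilon>^2" unfolding x_def using l6 e2 by (simp add: divide_right_mono)
  moreover have "1 \<le> 2 * L / \<epsilon>^2"
  proof -
    have "1 \<le> 2 * L" using Lh by simp
    also have "\<dots> \<le> 2 * L / \<epsilon>^2" using e2 Lh by (simp add: le_divide_eq)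
    finally show ?thesis .
  qed
  ultimately have "real T \<le> 66 * L / \<epsilon>^2" using Tx1 by (simp add: add_divide_distrib[symmetric])
  then have "real (2*T) \<le> 132 * L / \<epsilon>^2" by simp
  also have "\<dots> \<le> 200 * L / \<epsilon>^2" using Lh e2 by (simp add: divide_right_mono)
  finally show "real (2*T) \<le> 200 * ln (real M + 1) / \<epsilon>^2" unfolding L_def .
  show "0 < T" using Tx xpos by simp
  have "ln (6 * real M) \<le> real T * \<epsilon>^2 / 16"
    using Tx e2 unfolding x_def by (simp add: divide_le_eq mult.commute)
  then have "exp (- real T * \<epsilon>^2 / 16) \<le> exp (- ln (6 * real M))" by simp
  also have "\<dots> = 1 / (6 * real M)" using M by (simp add: exp_minus inverse_eq_divide)
  finally have "2 * real M * exp (- real T * \<epsilon>^2 / 16) \<le> 2 * real M * (1 / (6 * real M))"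
    using M by (intro mult_left_mono) auto
  also have "\<dots> = 1/3" using M by simp
  finally show "2 * real M * exp (- real T * \<epsilon>^2 / 16) \<le> 1/3" .
qed



theorem mainTheorem12:
  shows "\<exists>C>0. \<forall>n M (P :: nat \<Rightarrow> nat list) (\<epsilon>::real).
     \<epsilon> > 0 \<longrightarrow> (\<forall>i<M. is_pauli_word n (P i)) \<longrightarrow>
     (\<exists>T m E est. valid_protocol n T m E \<and>
        real (2 * T) \<le> C * ln (real M + 1) / \<epsilon>^2 \<and>
        (\<forall>\<rho>. density n \<rho> \<longrightarrow> success_prob T m E est M P \<epsilon> \<rho> \<ge> 2/3))"
proof (intro exI[of _ "200::real"] conjI allI impI)
  show "(0::real) < 200" by simp
  fix n M and P :: "nat \<Rightarrow> nat list" and \<epsilon> :: real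
  assume eps: "\<epsilon> > 0" and words: "\<forall>i<M. is_pauli_word n (P i)"
  have len: "length (P i) = n" if "i < M" for i using words that by (simp add: is_pauli_word_def)
  have Lnn: "0 \<le> ln (real M + 1)" by simp
  show "\<exists>T m E est. valid_protocol n T m E \<and>
        real (2 * T) \<le> 200 * ln (real M + 1) / \<epsilon>^2 \<and>
        (\<forall>\<rho>. density n \<rho> \<longrightarrow> success_prob T m E est M P \<epsilon> \<rho> \<ge> 2/3)"
  proof (cases "M = 0 \<or> 1 \<le> \<epsilon>")
    case True
    define E :: "nat list \<Rightarrow> nat \<Rightarrow> complex mat" where "E h = Bmat n" for h
    define est :: "nat list \<Rightarrow> nat \<Rightarrow> real" where "est xs i = 0" for xs i
    have v: "valid_protocol n 0 1 E" unfolding valid_protocol_def by simp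
    have b: "real (2 * 0) \<le> 200 * ln (real M + 1) / \<epsilon>^2" using Lnn eps by simp
    have s: "success_prob 0 1 E est M P \<epsilon> \<rho> \<ge> 2/3" if dens: "density n \<rho>" for \<rho>
    proof -
      have c: "\<forall>i<M. \<bar>est [] i - (cmod (mtrace (pauli_obs (P i) * \<rho>)))^2\<bar> \<le> \<epsilon>"
      proof (intro allI impI)
        fix i assume i: "i < M"
        then have e1: "1 \<le> \<epsilon>" using True by simp
        have "(cmod (mtrace (pauli_obs (P i) * \<rho>)))^2 \<le> 1" by (rule target_le1[OF dens len[OF i]])
        then show "\<bar>est [] i - (cmod (mtrace (pauli_obs (P i) * \<rho>)))^2\<bar> \<le> \<epsilon>"
          using e1 by (simp add: est_def)
      qed
      have "success_prob 0 1 E est M P \<epsilon> \<rho> = 1"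
        unfolding success_prob_def os_0 using c by (simp add: seq_prob_def)
      then show ?thesis by simp
    qed
    show ?thesis using v b s by blast
  next
    case False
    then have M1: "1 \<le> M" and e1: "\<epsilon> < 1" by auto
    define T where "T = nat \<lceil>16 * ln (6 * real M) / \<epsilon>^2\<rceil>"
    note TB = Tbound[OF M1 eps e1, folded T_def]
    define E :: "nat list \<Rightarrow> nat \<Rightarrow> complex mat" where "E h = Bmat n" for h
    define X where "X i k = lamw (P i) (dec n k)" for i k
    define est :: "nat list \<Rightarrow> nat \<Rightarrow> real" where "est xs i = (\<Sum>t<T. X i (xs!t)) / T" for xs i
    have v: "valid_protocol n T (4^n) E"
      unfolding valid_protocol_def E_def using Bmat_povm by blast
    have s: "success_prob T (4^n) E est M P \<epsilon> \<rho> \<ge> 2/3" if dens: "density n \<rho>" for \<rho>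
    proof -
      define q where "q k = Re (mtrace (Bmat n k * kron \<rho> \<rho>))" for k
      have q0: "\<forall>k<4^n. 0 \<le> q k" using qpack(1)[OF dens length_replicate] unfolding q_def by blast
      have q1: "(\<Sum>k<4^n. q k) = 1" using qpack(2)[OF dens length_replicate] unfolding q_def .
      have Xb: "\<forall>i<M. \<forall>k<4^n. \<bar>X i k\<bar> \<le> 1" unfolding X_def using lamw_bound by blast
      have tgt: "(cmod (mtrace (pauli_obs (P i) * \<rho>)))^2 = (\<Sum>k<4^n. q k * X i k)" if "i < M" for i
        using qpack(3)[OF dens len[OF that]] unfolding q_def X_def by simp
      have C: "2/3 \<le> (\<Sum>xs\<in>outcome_seqs T (4^n).
         if (\<forall>i<M. \<bar>(\<Sum>t<T. X i (xs!t)) / T - (\<Sum>k<4^n. q k * X i k)\<bar> \<le> \<epsilon>) then (\<Prod>t<T. q (xs!t)) else 0)"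
        by (rule conc[OF q0 q1 Xb eps _ TB(2) TB(3)]) (use e1 in simp)
      have "success_prob T (4^n) E est M P \<epsilon> \<rho> = (\<Sum>xs\<in>outcome_seqs T (4^n).
         if (\<forall>i<M. \<bar>(\<Sum>t<T. X i (xs!t)) / T - (\<Sum>k<4^n. q k * X i k)\<bar> \<le> \<epsilon>) then (\<Prod>t<T. q (xs!t)) else 0)"
        unfolding success_prob_def
      proof (intro sum.cong refl)
        fix xs assume xs: "xs \<in> outcome_seqs T (4^n)"
        then have lx: "length xs = T" by (simp add: outcome_seqs_def)
        have sp: "seq_prob \<rho> E xs = (\<Prod>t<T. q (xs!t))"
          unfolding seq_prob_def E_def q_def lx ..
        have cnd: "(\<forall>i<M. \<bar>est xs i - (cmod (mtrace (pauli_obs (P i) * \<rho>)))^2\<bar> \<le> \<epsilon>)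
            = (\<forall>i<M. \<bar>(\<Sum>t<T. X i (xs!t)) / T - (\<Sum>k<4^n. q k * X i k)\<bar> \<le> \<epsilon>)"
          using tgt unfolding est_def by auto
        show "(if \<forall>i<M. \<bar>est xs i - (cmod (mtrace (pauli_obs (P i) * \<rho>)))^2\<bar> \<le> \<epsilon> then seq_prob \<rho> E xs else 0)
          = (if \<forall>i<M. \<bar>(\<Sum>t<T. X i (xs!t)) / T - (\<Sum>k<4^n. q k * X i k)\<bar> \<le> \<epsilon> then \<Prod>t<T. q (xs!t) else 0)"
          by (simp only: cnd sp)
      qed
      then show ?thesis using C by simp
    qed
    show ?thesis using v TB(1) s by blast
  qed
qed


end
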